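(* Let $E$ be a separable real Banach space and $g$ a linear isometric automorphism of $E$ with $g\neq\mathrm{id}$. Then there exist $x\in E$ and $\lambda\in E^*$ such that $\lambda$ norms $x$ but does not norm $gx$, i.e., $\|\lambda\|=\|x\|=1$, $\lambda(x)=1$ and $\lambda(gx)<1$. *)

theory Defs
  imports "HOL-Analysis.Analysis"
begin

end

theory Submission
  imports Defs
begin


definition sublin :: "('a::real_vector \<Rightarrow> real) \<Rightarrow> bool" where
  "sublin q \<longleftrightarrow> (\<forall>x y. q (x + y) \<le> q x + q y) \<and> (\<forall>c x. 0 \<le> c \<longrightarrow> q (c *\<^sub>R x) = c * q x)"

lemma sublin_add: "sublin q \<Longrightarrow> q (x + y) \<le> q x + q y"
  by (simp add: sublin_def)
lemma sublin_scale: "sublin q \<Longrightarrow> 0 \<le> c \<Longrightarrow> q (c *\<^sub>R x) = c * q x"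
  by (simp add: sublin_def)
lemma sublin_zero: "sublin q \<Longrightarrow> q 0 = 0"
  using sublin_scale[of q 0 0] by simp
lemma sublin_lower: "sublin q \<Longrightarrow> - q (- x) \<le> q x"
  using sublin_add[of q x "-x"] sublin_zero[of q] by simp

definition red :: "('a::real_vector \<Rightarrow> real) \<Rightarrow> 'a \<Rightarrow> 'a \<Rightarrow> real" where
  "red q y x = Inf ((\<lambda>t. q (x + t *\<^sub>R y) - t * q y) ` {0..})"

lemma red_term_lb:
  assumes "sublin q" "0 \<le> t"
  shows "- q (- x) \<le> q (x + t *\<^sub>R y) - t * q y"
proof -
  have "q (t *\<^sub>R y) \<le> q (x + t *\<^sub>R y) + q (- x)"
    using sublin_add[OF assms(1), of "x + t *\<^sub>R y" "-x"] by simp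
  then show ?thesis using sublin_scale[OF assms] by simp
qed

lemma red_bdd: "sublin q \<Longrightarrow> bdd_below ((\<lambda>t. q (x + t *\<^sub>R y) - t * q y) ` {0..})"
  by (rule bdd_belowI[where m="- q (- x)"]) (auto intro: red_term_lb)

lemma red_le_term: "sublin q \<Longrightarrow> 0 \<le> t \<Longrightarrow> red q y x \<le> q (x + t *\<^sub>R y) - t * q y"
  unfolding red_def by (rule cInf_lower[OF _ red_bdd]) auto

lemma red_le: "sublin q \<Longrightarrow> red q y x \<le> q x"
  using red_le_term[of q 0] by simp

lemma red_ge_term: "(\<And>t. 0 \<le> t \<Longrightarrow> z \<le> q (x + t *\<^sub>R y) - t * q y) \<Longrightarrow> z \<le> red q y x"
  unfolding red_def by (rule cInf_greatest) auto

lemma red_lb: "sublin q \<Longrightarrow> - q (- x) \<le> red q y x"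
  by (rule red_ge_term) (rule red_term_lb)

lemma red_sublin:
  assumes q: "sublin q"
  shows "sublin (red q y)"
  unfolding sublin_def
proof (intro conjI allI impI)
  fix x1 x2
  have A: "red q y (x1 + x2) - (q (x2 + t *\<^sub>R y) - t * q y) \<le> q (x1 + s *\<^sub>R y) - s * q y"
    if "0 \<le> s" "0 \<le> t" for s t
  proof -
    have "red q y (x1 + x2) \<le> q (x1 + x2 + (s + t) *\<^sub>R y) - (s + t) * q y"
      using red_le_term[OF q, of "s + t"] that by simp
    also have "q (x1 + x2 + (s + t) *\<^sub>R y) \<le> q (x1 + s *\<^sub>R y) + q (x2 + t *\<^sub>R y)"
      using sublin_add[OF q, of "x1 + s *\<^sub>R y" "x2 + t *\<^sub>R y"]
      by (simp add: algebra_simps)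
    finally show ?thesis by (simp add: algebra_simps)
  qed
  have B: "red q y (x1 + x2) - red q y x1 \<le> q (x2 + t *\<^sub>R y) - t * q y" if "0 \<le> t" for t
  proof -
    have "red q y (x1 + x2) - (q (x2 + t *\<^sub>R y) - t * q y) \<le> red q y x1"
      by (rule red_ge_term) (use A that in auto)
    then show ?thesis by simp
  qed
  have "red q y (x1 + x2) - red q y x1 \<le> red q y x2"
    by (rule red_ge_term) (use B in auto)
  then show "red q y (x1 + x2) \<le> red q y x1 + red q y x2" by simp
next
  fix c :: real and x
  assume c: "0 \<le> c"
  show "red q y (c *\<^sub>R x) = c * red q y x"
  proof (cases "c = 0")
    case True
    have "red q y 0 = 0"
    proof (rule antisym)
      show "red q y 0 \<le> 0" using red_le[OF q, of y 0] sublin_zero[OF q] by simp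
      show "0 \<le> red q y 0" using red_lb[OF q, of 0 y] sublin_zero[OF q] by simp
    qed
    then show ?thesis using True by simp
  next
    case False
    then have cp: "c > 0" using c by simp
    show ?thesis
    proof (rule antisym)
      have "red q y (c *\<^sub>R x) / c \<le> red q y x"
      proof (rule red_ge_term)
        fix s :: real assume s: "0 \<le> s"
        have "red q y (c *\<^sub>R x) \<le> q (c *\<^sub>R x + (c * s) *\<^sub>R y) - (c * s) * q y"
          using red_le_term[OF q, of "c * s"] s c by simp
        also have "q (c *\<^sub>R x + (c * s) *\<^sub>R y) = c * q (x + s *\<^sub>R y)"
          using sublin_scale[OF q c, of "x + s *\<^sub>R y"] by (simp add: algebra_simps)
        finally show "red q y (c *\<^sub>R x) / c \<le> q (x + s *\<^sub>R y) - s * q y"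
          using cp by (simp add: field_simps)
      qed
      then show "red q y (c *\<^sub>R x) \<le> c * red q y x" using cp by (simp add: field_simps)
    next
      show "c * red q y x \<le> red q y (c *\<^sub>R x)"
      proof (rule red_ge_term)
        fix t :: real assume t: "0 \<le> t"
        have "red q y x \<le> q (x + (t / c) *\<^sub>R y) - (t / c) * q y"
          using red_le_term[OF q, of "t / c"] t cp by simp
        also have "c * q (x + (t / c) *\<^sub>R y) = q (c *\<^sub>R x + t *\<^sub>R y)"
          using sublin_scale[OF q c, of "x + (t / c) *\<^sub>R y"] cp by (simp add: algebra_simps)
        ultimately show "c * red q y x \<le> q (c *\<^sub>R x + t *\<^sub>R y) - t * q y"
          using cp by (simp add: field_simps)
      qed
    qed
  qed
qed

lemma fixed_linear:
  assumes q: "sublin q" and fx: "\<And>y. red q y = q"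
  shows "linear q"
proof -
  have sup: "q x + q y \<le> q (x + y)" for x y
  proof -
    have "q x = red q y x" using fx by simp
    also have "\<dots> \<le> q (x + 1 *\<^sub>R y) - 1 * q y" by (rule red_le_term[OF q]) simp
    finally show ?thesis by simp
  qed
  have add: "q (x + y) = q x + q y" for x y
    using sup[of x y] sublin_add[OF q, of x y] by simp
  have neg: "q (- x) = - q x" for x
    using add[of x "-x"] sublin_zero[OF q] by simp
  show ?thesis
  proof (rule linearI)
    fix r :: real and b
    show "q (r *\<^sub>R b) = r *\<^sub>R q b"
    proof (cases "0 \<le> r")
      case True then show ?thesis using sublin_scale[OF q] by simp
    next
      case False
      then have "q (r *\<^sub>R b) = - q ((- r) *\<^sub>R b)" using neg[of "(- r) *\<^sub>R b"] by simp
      also have "\<dots> = r * q b" using sublin_scale[OF q, of "- r" b] False by simp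
      finally show ?thesis by simp
    qed
  qed (rule add)
qed

lemma norm_sublin: "sublin (\<lambda>x::'a::real_normed_vector. norm x)"
  by (simp add: sublin_def norm_triangle_ineq)

lemma hahn_banach_norming:
  fixes u :: "'a::real_normed_vector"
  assumes u: "norm u = 1"
  shows "\<exists>l. linear l \<and> (\<forall>x. l x \<le> norm x) \<and> l u = 1"
proof -
  define A where "A = {q::'a\<Rightarrow>real. sublin q \<and> (\<forall>x. q x \<le> norm x) \<and> q (- u) \<le> -1}"
  define P where "P = (\<lambda>(a::'a\<Rightarrow>real) b. \<forall>x. b x \<le> a x)"
  have n0: "red norm u \<in> A"
  proof -
    have "red norm u (- u) \<le> norm (- u + 1 *\<^sub>R u) - 1 * norm u"
      by (rule red_le_term[OF norm_sublin]) simp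
    moreover have "sublin (red norm u)" using red_sublin[OF norm_sublin[where 'a='a]] by blast
    moreover have "red norm u x \<le> norm x" for x using red_le[OF norm_sublin[where 'a='a]] by blast
    ultimately show ?thesis unfolding A_def using u by simp
  qed
  have po: "partial_order_on A (relation_of P A)"
    unfolding partial_order_on_def preorder_on_def refl_on_def trans_def antisym_def relation_of_def P_def
    by (auto intro: order_trans antisym simp: fun_eq_iff)
  have ch: "\<exists>m\<in>A. \<forall>a\<in>C. P a m" if C: "C \<in> Chains (relation_of P A)" for C
  proof (cases "C = {}")
    case True then show ?thesis using n0 by blast
  next
    case False
    have CA: "C \<subseteq> A" using C unfolding Chains_def relation_of_def by auto
    have comp: "P a b \<or> P b a" if "a \<in> C" "b \<in> C" for a b
      using C that unfolding Chains_def relation_of_def by auto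
    have lbq: "- norm x \<le> q x" if "q \<in> C" for q x
    proof -
      have "q (- x) \<le> norm (- x)" using CA that unfolding A_def by blast
      moreover have "- q (- x) \<le> q x" using CA that unfolding A_def by (auto intro: sublin_lower)
      ultimately show ?thesis by simp
    qed
    define m where "m = (\<lambda>x. Inf ((\<lambda>q. q x) ` C))"
    have bdd: "bdd_below ((\<lambda>q. q x) ` C)" for x
      by (rule bdd_belowI[where m="- norm x"]) (auto intro: lbq)
    have mle: "m x \<le> q x" if "q \<in> C" for q x
      unfolding m_def by (rule cInf_lower[OF _ bdd]) (use that in auto)
    have mge: "z \<le> m x" if "\<And>q. q \<in> C \<Longrightarrow> z \<le> q x" for z x
      unfolding m_def by (rule cInf_greatest) (use False that in auto)
    obtain q0 where q0: "q0 \<in> C" using False by blast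
    have q0A: "q0 \<in> A" using CA q0 by blast
    have sl: "sublin q" if "q \<in> C" for q using CA that unfolding A_def by auto
    have "sublin m"
      unfolding sublin_def
    proof (intro conjI allI impI)
      fix x y
      have "m (x + y) \<le> q1 x + q2 y" if q12: "q1 \<in> C" "q2 \<in> C" for q1 q2
      proof -
        obtain q where q: "q \<in> C" "q x \<le> q1 x" "q y \<le> q2 y"
          using comp[OF q12] q12 unfolding P_def by blast
        have "m (x + y) \<le> q (x + y)" by (rule mle[OF q(1)])
        also have "\<dots> \<le> q x + q y" by (rule sublin_add[OF sl[OF q(1)]])
        finally show ?thesis using q by simp
      qed
      then have "m (x + y) - q2 y \<le> m x" if "q2 \<in> C" for q2
        using that by (intro mge) force
      then have "m (x + y) - m x \<le> m y"
        by (intro mge) force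
      then show "m (x + y) \<le> m x + m y" by simp
    next
      fix c :: real and x
      assume c: "0 \<le> c"
      show "m (c *\<^sub>R x) = c * m x"
      proof (cases "c = 0")
        case True
        have "m 0 = 0"
        proof (rule antisym)
          show "m 0 \<le> 0" using mle[OF q0, of 0] sublin_zero[OF sl[OF q0]] by simp
          show "0 \<le> m 0" by (rule mge) (simp add: sublin_zero[OF sl])
        qed
        then show ?thesis using True by simp
      next
        case False
        then have cp: "0 < c" using c by simp
        show ?thesis
        proof (rule antisym)
          have "m (c *\<^sub>R x) / c \<le> m x"
          proof (rule mge)
            fix q assume "q \<in> C"
            then show "m (c *\<^sub>R x) / c \<le> q x"
              using mle[of q "c *\<^sub>R x"] sublin_scale[OF sl c] cp by (simp add: field_simps)
          qed
          then show "m (c *\<^sub>R x) \<le> c * m x" using cp by (simp add: field_simps)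
        next
          show "c * m x \<le> m (c *\<^sub>R x)"
          proof (rule mge)
            fix q assume "q \<in> C"
            then show "c * m x \<le> q (c *\<^sub>R x)"
              using mle[of q x] sublin_scale[OF sl[of q] c, of x] c by (simp add: mult_left_mono)
          qed
        qed
      qed
    qed
    moreover have "m x \<le> norm x" for x
      using mle[OF q0, of x] q0A unfolding A_def by (smt (verit) mem_Collect_eq)
    moreover have "m (- u) \<le> -1"
      using mle[OF q0, of "- u"] q0A unfolding A_def by (smt (verit) mem_Collect_eq)
    ultimately have "m \<in> A" unfolding A_def by simp
    moreover have "\<forall>a\<in>C. P a m" unfolding P_def using mle by blast
    ultimately show ?thesis by blast
  qed
  obtain q where qA: "q \<in> A" and qmin: "\<And>a. a \<in> A \<Longrightarrow> P q a \<Longrightarrow> a = q"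
    using predicate_Zorn[OF po ch] by blast
  have sq: "sublin q" using qA unfolding A_def by simp
  have "red q y = q" for y
  proof (rule qmin)
    show "red q y \<in> A"
      using qA red_sublin[OF sq] red_le[OF sq, of y] unfolding A_def
      by (auto intro: order_trans)
    show "P q (red q y)" unfolding P_def using red_le[OF sq] by simp
  qed
  then have lin: "linear q" by (rule fixed_linear[OF sq])
  have le: "\<forall>x. q x \<le> norm x" using qA unfolding A_def by simp
  have "q (- u) \<le> -1" using qA unfolding A_def by simp
  then have "q u \<ge> 1" using linear_neg[OF lin, of u] by simp
  moreover have "q u \<le> 1" using le[rule_format, of u] u by simp
  ultimately show ?thesis using lin le by (intro exI[of _ q]) simp
qed


lemma funpow_linear:
  fixes g :: "'a::real_vector \<Rightarrow> 'a" and k :: nat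
  shows "linear g \<Longrightarrow> linear (g ^^ k)"
  by (induction k) (simp_all add: linear_compose linear_iff)

lemma funpow_isom:
  fixes g :: "'a::real_normed_vector \<Rightarrow> 'a" and k :: nat
  shows "(\<And>x. norm (g x) = norm x) \<Longrightarrow> norm ((g ^^ k) x) = norm x"
  by (induction k) simp_all

theorem lemma4p4:
  fixes g :: "'a::banach \<Rightarrow> 'a"
  assumes separable: "\<exists>D::'a set. countable D \<and> closure D = UNIV"
    and lin: "linear g"
    and bij: "bij g"
    and isom: "\<And>x. norm (g x) = norm x"
    and nid: "g \<noteq> id"
  shows "\<exists>x::'a. \<exists>l::'a \<Rightarrow> real.
           bounded_linear l \<and> onorm l = 1 \<and> norm x = 1 \<and>
           l x = 1 \<and> l (g x) < 1"
proof (rule ccontr)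
  assume H: "\<not> ?thesis"
  obtain x0 where x0: "g x0 \<noteq> x0" using nid by (auto simp: fun_eq_iff)
  define y where "y = x0 - g x0"
  define ny where "ny = norm y"
  have nyp: "ny > 0" using x0 unfolding ny_def y_def by simp
  define u where "u = y /\<^sub>R ny"
  have nu: "norm u = 1" using nyp unfolding u_def ny_def by simp
  obtain l where ll: "linear l" and lle: "\<And>x. l x \<le> norm x" and lu: "l u = 1"
    using hahn_banach_norming[OF nu] by blast
  have labs: "\<bar>l x\<bar> \<le> norm x" for x
    using lle[of x] lle[of "- x"] linear_neg[OF ll, of x] by auto
  have bl: "bounded_linear l"
    using ll labs by (auto simp: bounded_linear_def bounded_linear_axioms_def intro!: exI[of _ 1])
  have on: "onorm l = 1"
  proof (rule antisym)
    show "onorm l \<le> 1" by (rule onorm_bound) (use labs in simp_all)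
    show "1 \<le> onorm l" using onorm[OF bl, of u] lu nu by simp
  qed
  have step: "l (g v) = 1" if "norm v = 1" "l v = 1" for v
  proof -
    have "\<not> l (g v) < 1" using H bl on that by blast
    moreover have "l (g v) \<le> 1" using lle[of "g v"] isom[of v] that by simp
    ultimately show ?thesis by simp
  qed
  have lk: "l ((g ^^ k) u) = 1" for k
  proof (induction k)
    case 0 then show ?case using lu by simp
  next
    case (Suc k)
    have "norm ((g ^^ k) u) = 1" using funpow_isom[OF isom] nu by simp
    then show ?case using step Suc by simp
  qed
  have sumeq: "(\<Sum>k<N. (g ^^ k) u) = (x0 - (g ^^ N) x0) /\<^sub>R ny" for N
  proof (induction N)
    case 0 then show ?case by simp
  next
    case (Suc N)
    have lin': "linear (g ^^ N)" by (rule funpow_linear[OF lin])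
    have "(g ^^ N) u = ((g ^^ N) x0 - (g ^^ N) (g x0)) /\<^sub>R ny"
      unfolding u_def y_def using linear_scale[OF lin'] linear_diff[OF lin'] by simp
    also have "(g ^^ N) (g x0) = (g ^^ Suc N) x0" by (simp add: funpow_swap1)
    finally have "(g ^^ N) u = ((g ^^ N) x0 - (g ^^ Suc N) x0) /\<^sub>R ny" .
    then have "(\<Sum>k<Suc N. (g ^^ k) u) = (x0 - (g ^^ N) x0) /\<^sub>R ny + ((g ^^ N) x0 - (g ^^ Suc N) x0) /\<^sub>R ny"
      using Suc by (simp only: sum.lessThan_Suc)
    also have "\<dots> = ((x0 - (g ^^ N) x0) + ((g ^^ N) x0 - (g ^^ Suc N) x0)) /\<^sub>R ny"
      by (rule scaleR_right_distrib[symmetric])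
    also have "(x0 - (g ^^ N) x0) + ((g ^^ N) x0 - (g ^^ Suc N) x0) = x0 - (g ^^ Suc N) x0"
      by (simp add: algebra_simps)
    finally show ?case .
  qed
  obtain N :: nat where N: "2 * norm x0 / ny < real N" using reals_Archimedean2 by blast
  have "real N = l (\<Sum>k<N. (g ^^ k) u)"
    using linear_sum[OF ll, of "\<lambda>k. (g ^^ k) u" "{..<N}"] lk by simp
  also have "\<dots> \<le> norm (x0 - (g ^^ N) x0) / ny"
    using lle[of "(x0 - (g ^^ N) x0) /\<^sub>R ny"] nyp sumeq[of N] by (simp add: divide_inverse mult.commute)
  also have "\<dots> \<le> 2 * norm x0 / ny"
  proof -
    have "norm (x0 - (g ^^ N) x0) \<le> norm x0 + norm ((g ^^ N) x0)" by (rule norm_triangle_ineq4)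
    then have "norm (x0 - (g ^^ N) x0) \<le> 2 * norm x0" using funpow_isom[OF isom] by simp
    then show ?thesis using nyp by (simp add: divide_right_mono)
  qed
  finally show False using N by simp
qed

end
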